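(* Let $(X,d)$ be a complete metric space, $\lambda>0$, and $\ell\in\mathrm{LSC}(X)$ bounded with $\inf_X\ell=0$. If $u,v\in\mathrm{LSC}(X)$ are, respectively, a bounded subsolution and a bounded supersolution of $(\mathcal{G}_\lambda)$, then $u\le v$ on $X$.
   Context: $\mathrm{LSC}(X)$ is the set of real-valued lower semicontinuous functions on $X$. Global slope: $G[u](x)=\sup_{y\neq x}\frac{(u(x)-u(y))_+}{d(x,y)}$ if $u(x)<+\infty$, $G[u](x)=+\infty$ otherwise. Equation $(\mathcal{G}_\lambda)$: $\lambda u+G[u]=\ell$ on $X$ with $\inf_Xu=0$. A subsolution is $u:X\to\mathbb{R}\cup\{+\infty\}$ with $\inf_Xu=0$ and $\lambda u+G[u]\le\ell$ on $X$; a supersolution is a lower semicontinuous $v:X\to\mathbb{R}\cup\{+\infty\}$ with $\inf_Xv=0$ and $\lambda v+G[v]\ge\ell$ on $X$. *)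

theory Defs
  imports "HOL-Analysis.Analysis"
begin

definition lsc :: "('a::topological_space \<Rightarrow> real) \<Rightarrow> bool" where
  "lsc f \<longleftrightarrow> (\<forall>x. \<forall>t. t < f x \<longrightarrow> eventually (\<lambda>y. t < f y) (at x))"

text \<open>Global slope of a real-valued function, valued in the extended reals:
  G[u](x) = sup over y different from x of (u x - u y)_+ / d(x,y).
  (The 0 inserted only matters when the space is a single point; all other
  elements are nonnegative anyway.)\<close>
definition global_slope :: "('a::metric_space \<Rightarrow> real) \<Rightarrow> 'a \<Rightarrow> ereal" where
  "global_slope u x = Sup (insert 0 ((\<lambda>y. ereal (max 0 (u x - u y) / dist x y)) ` {y. y \<noteq> x}))"

definition subsolution :: "real \<Rightarrow> ('a::metric_space \<Rightarrow> real) \<Rightarrow> ('a \<Rightarrow> real) \<Rightarrow> bool" where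
  "subsolution lam l u \<longleftrightarrow> Inf (range u) = 0 \<and>
     (\<forall>x. ereal (lam * u x) + global_slope u x \<le> ereal (l x))"

definition supersolution :: "real \<Rightarrow> ('a::metric_space \<Rightarrow> real) \<Rightarrow> ('a \<Rightarrow> real) \<Rightarrow> bool" where
  "supersolution lam l v \<longleftrightarrow> lsc v \<and> Inf (range v) = 0 \<and>
     (\<forall>x. ereal (lam * v x) + global_slope v x \<ge> ereal (l x))"

end

theory Submission imports Defs begin

lemma ekeland:
  fixes f :: "'a::{metric_space,complete_space} \<Rightarrow> real"
  assumes cl: "\<And>t. closed {x. f x \<le> t}" and bdd: "\<And>x. B \<le> f x" and e: "e > 0"
  shows "\<exists>z. f z \<le> f x0 \<and> (\<forall>y. y \<noteq> z \<longrightarrow> f z - e * dist z y < f y)"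
proof -
  define S where "S x = {y. f y + e * dist x y \<le> f x}" for x
  have S_refl: "x \<in> S x" for x by (simp add: S_def)
  have S_trans: "z \<in> S x" if "y \<in> S x" "z \<in> S y" for x y z
  proof -
    have "dist x z \<le> dist x y + dist y z" by (rule dist_triangle)
    hence "e * dist x z \<le> e * dist x y + e * dist y z" using e
      by (metis distrib_left mult_left_mono less_imp_le)
    thus ?thesis using that by (simp add: S_def)
  qed
  have bddS: "bdd_below (f ` S x)" for x using bdd by (meson bdd_belowI2)
  have ex: "\<exists>y. y \<in> S x \<and> f y \<le> Inf (f ` S x) + (1/2)^n" for x n
  proof -
    have "Inf (f ` S x) < Inf (f ` S x) + (1/2)^n" by simp
    then obtain a where "a \<in> f ` S x" "a < Inf (f ` S x) + (1/2)^n"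
      using cInf_lessD[of "f ` S x"] S_refl by blast
    thus ?thesis by (auto intro: less_imp_le)
  qed
  define g where "g x n = (SOME y. y \<in> S x \<and> f y \<le> Inf (f ` S x) + (1/2)^n)" for x n
  have g: "g x n \<in> S x \<and> f (g x n) \<le> Inf (f ` S x) + (1/2)^n" for x n
    unfolding g_def by (rule someI_ex[OF ex])
  define X where "X = rec_nat x0 (\<lambda>n x. g x n)"
  have X0: "X 0 = x0" by (simp add: X_def)
  have XS: "X (Suc n) = g (X n) n" for n by (simp add: X_def)
  have mono: "X m \<in> S (X n)" if "n \<le> m" for n m
    using that
  proof (induction m rule: dec_induct)
    case base then show ?case by (rule S_refl)
  next
    case (step m) then show ?case using g XS S_trans by metis
  qed
  have low: "f (X (Suc n)) - (1/2)^n \<le> f y" if "y \<in> S (X n)" for n y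
  proof -
    have "Inf (f ` S (X n)) \<le> f y" using that bddS by (auto intro: cInf_lower)
    thus ?thesis using g[of "X n" n] XS by simp
  qed
  have db: "e * dist (X (Suc n)) (X m) \<le> (1/2)^n" if "Suc n \<le> m" for n m
  proof -
    have "X m \<in> S (X (Suc n))" using mono that by blast
    moreover have "X m \<in> S (X n)" using mono that by simp
    ultimately show ?thesis using low[of "X m" n] by (simp add: S_def)
  qed
  have "Cauchy X"
    unfolding Cauchy_def
  proof (intro allI impI)
    fix eps :: real assume "eps > 0"
    then obtain N where N: "(1/2::real)^N < e * eps / 2" using e
      by (metis real_arch_pow_inv divide_pos_pos half_gt_zero mult_pos_pos one_less_numeral_iff
          semiring_norm(76) zero_less_divide_1_iff zero_less_numeral divide_less_eq_1)
    show "\<exists>M. \<forall>m\<ge>M. \<forall>n\<ge>M. dist (X m) (X n) < eps"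
    proof (intro exI allI impI)
      fix m n assume "Suc N \<le> m" "Suc N \<le> n"
      have "dist (X m) (X n) \<le> dist (X (Suc N)) (X m) + dist (X (Suc N)) (X n)"
        by (rule dist_triangle3)
      moreover have "e * dist (X (Suc N)) (X m) \<le> (1/2)^N" "e * dist (X (Suc N)) (X n) \<le> (1/2)^N"
        using db \<open>Suc N \<le> m\<close> \<open>Suc N \<le> n\<close> by auto
      ultimately have "e * dist (X m) (X n) \<le> 2 * (1/2)^N" using e
        mult_left_mono[OF \<open>dist (X m) (X n) \<le> _\<close>, of e]
        by (simp add: distrib_left)
      also have "\<dots> < e * eps" using N by simp
      finally show "dist (X m) (X n) < eps" using e by simp
    qed
  qed
  then obtain z where lim: "X \<longlonglongrightarrow> z" using Cauchy_convergent convergent_def by blast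
  have zin: "z \<in> S (X n)" for n
  proof -
    let ?c = "f (X n) - e * dist (X n) z"
    have "f z \<le> ?c + d" if d: "d > 0" for d
    proof -
      have ev1: "eventually (\<lambda>m. dist (X m) z < d / e) sequentially"
        using lim d e by (simp add: tendsto_iff)
      have ev2: "eventually (\<lambda>m. n \<le> m) sequentially" by (rule eventually_ge_at_top)
      have "eventually (\<lambda>m. X m \<in> {x. f x \<le> ?c + d}) sequentially"
        using ev1 ev2
      proof eventually_elim
        case (elim m)
        have "X m \<in> S (X n)" using mono elim by simp
        hence "f (X m) + e * dist (X n) (X m) \<le> f (X n)" by (simp add: S_def)
        moreover have "dist (X n) z \<le> dist (X n) (X m) + dist (X m) z" by (rule dist_triangle)
        moreover have "e * dist (X m) z < d" using elim e by (simp add: field_simps)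
        ultimately show ?case using e
          by simp (smt (verit, best) distrib_left mult_left_mono)
      qed
      from Lim_in_closed_set[OF cl this _ lim] show ?thesis by simp
    qed
    hence "f z \<le> ?c" by (rule field_le_epsilon)
    thus ?thesis by (simp add: S_def)
  qed
  show ?thesis
  proof (intro exI conjI allI impI)
    show "f z \<le> f x0" using zin[of 0] X0 e by (simp add: S_def) (smt (verit) zero_le_dist mult_nonneg_nonneg)
  next
    fix y assume "y \<noteq> z"
    show "f z - e * dist z y < f y"
    proof (rule ccontr)
      assume neg: "\<not> f z - e * dist z y < f y"
      hence "y \<in> S z" by (simp add: S_def)
      have dpos: "e * dist z y > 0" using e \<open>y \<noteq> z\<close> by simp
      obtain n where n: "(1/2::real)^n < e * dist z y"
        using real_arch_pow_inv[OF dpos, of "1/2"] by auto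
      have "y \<in> S (X n)" using S_trans zin \<open>y \<in> S z\<close> by blast
      hence "f (X (Suc n)) - (1/2)^n \<le> f y" by (rule low)
      moreover have "f z + e * dist (X (Suc n)) z \<le> f (X (Suc n))" using zin[of "Suc n"] by (simp add: S_def)
      moreover have "e * dist (X (Suc n)) z \<ge> 0" using e by simp
      ultimately show False using neg n by linarith
    qed
  qed
qed

lemma sub_ineq:
  fixes u l :: "'a::metric_space \<Rightarrow> real"
  assumes "subsolution lam l u" "y \<noteq> x"
  shows "lam * u x + max 0 (u x - u y) / dist x y \<le> l x"
proof -
  have "ereal (max 0 (u x - u y) / dist x y) \<le> global_slope u x"
    unfolding global_slope_def using assms(2) by (intro Sup_upper) auto
  moreover have "ereal (lam * u x) + global_slope u x \<le> ereal (l x)"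
    using assms(1) by (simp add: subsolution_def)
  ultimately have "ereal (lam * u x) + ereal (max 0 (u x - u y) / dist x y) \<le> ereal (l x)"
    by (meson add_left_mono order_trans)
  thus ?thesis by simp
qed

theorem theorem3p14:
  fixes l u v :: "'a::{metric_space, complete_space} \<Rightarrow> real" and lam :: real
  assumes "lam > 0"
    and "lsc l" and "bounded (range l)" and "Inf (range l) = 0"
    and "lsc u" and "bounded (range u)" and "subsolution lam l u"
    and "lsc v" and "bounded (range v)" and "supersolution lam l v"
  shows "\<forall>x. u x \<le> v x"
proof (rule ccontr)
  assume "\<not> (\<forall>x. u x \<le> v x)"
  then obtain x0 where x0: "v x0 < u x0" by (auto simp: not_le)
  obtain L where L: "\<And>x. \<bar>l x\<bar> \<le> L" using assms(3) unfolding bounded_iff by auto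
  obtain Bu where Bu: "\<And>x. \<bar>u x\<bar> \<le> Bu" using assms(6) unfolding bounded_iff by auto
  have u0: "u x \<ge> 0" for x
    using assms(7) bounded_imp_bdd_below[OF assms(6)] unfolding subsolution_def
    by (metis cInf_lower rangeI)
  have v0: "v x \<ge> 0" for x
    using assms(10) bounded_imp_bdd_below[OF assms(9)] unfolding supersolution_def
    by (metis cInf_lower rangeI)
  have lip: "u y - u x \<le> (L + 1) * dist x y" for x y
  proof (cases "x = y")
    case False
    have "lam * u y + max 0 (u y - u x) / dist y x \<le> l y"
      using sub_ineq[OF assms(7)] False by blast
    moreover have "lam * u y \<ge> 0" using u0 assms(1) by simp
    ultimately have "max 0 (u y - u x) / dist y x \<le> L + 1" using L[of y] by linarith
    moreover have "dist y x > 0" using False by simp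
    ultimately have "max 0 (u y - u x) \<le> (L + 1) * dist x y"
      by (simp add: divide_le_eq dist_commute)
    thus ?thesis by linarith
  qed simp
  have Lpos: "L + 1 > 0" using L[of x0] by linarith
  define w where "w x = v x - u x" for x
  have cl: "closed {x. w x \<le> t}" for t
  proof -
    have "open {x. t < w x}"
      unfolding open_dist
    proof (intro ballI)
      fix x assume "x \<in> {x. t < w x}"
      hence s: "w x - t > 0" by simp
      define s where "s = w x - t"
      have "eventually (\<lambda>y. v x - s/2 < v y) (at x)"
        using assms(8) s unfolding lsc_def s_def by simp
      then obtain d where d: "d > 0" "\<And>y. y \<noteq> x \<Longrightarrow> dist y x < d \<Longrightarrow> v x - s/2 < v y"
        unfolding eventually_at by auto
      show "\<exists>e>0. \<forall>y. dist y x < e \<longrightarrow> y \<in> {x. t < w x}"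
      proof (intro exI[of _ "min d (s / (2 * (L+1)))"] conjI allI impI)
        show "min d (s / (2 * (L+1))) > 0" using d s Lpos s_def by simp
      next
        fix y assume y: "dist y x < min d (s / (2 * (L+1)))"
        show "y \<in> {x. t < w x}"
        proof (cases "y = x")
          case True then show ?thesis using s by simp
        next
          case False
          have "v x - s/2 < v y" using d y False by simp
          moreover have "u y - u x \<le> (L+1) * dist x y" by (rule lip)
          moreover have "(L+1) * dist x y < s/2"
            using y Lpos by (simp add: dist_commute field_simps)
          ultimately have "t < w y" unfolding w_def s_def by argo
          thus ?thesis by simp
        qed
      qed
    qed
    hence "closed (- {x. t < w x})" by (rule closed_Compl)
    moreover have "- {x. t < w x} = {x. w x \<le> t}" by auto
    ultimately show ?thesis by simp
  qed
  have wB: "- Bu \<le> w x" for x using v0[of x] Bu[of x] by (simp add: w_def)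
  define e where "e = lam * (u x0 - v x0) / 2"
  have e: "e > 0" using assms(1) x0 by (simp add: e_def)
  obtain z where z1: "w z \<le> w x0" and z2: "\<And>y. y \<noteq> z \<Longrightarrow> w z - e * dist z y < w y"
    using ekeland[OF cl wB e, of x0] by blast
  define a where "a = l z - lam * v z"
  define b where "b = l z - lam * u z"
  have "lam * (u z - v z) \<ge> lam * (u x0 - v x0)"
    using z1 assms(1) by (simp add: w_def)
  hence ab: "a - b \<ge> 2 * e" unfolding a_def b_def e_def by (simp add: right_diff_distrib)
  have b0: "b \<ge> 0"
  proof -
    have "ereal (lam * u z) + global_slope u z \<le> ereal (l z)"
      using assms(7) by (simp add: subsolution_def)
    moreover have "global_slope u z \<ge> 0" unfolding global_slope_def by (intro Sup_upper) auto
    ultimately have "ereal (lam * u z) \<le> ereal (l z)"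
      by (metis add.right_neutral add_left_mono order_trans)
    thus ?thesis by (simp add: b_def)
  qed
  have Ga: "global_slope v z \<ge> ereal a"
  proof -
    have h: "ereal (lam * v z) + global_slope v z \<ge> ereal (l z)"
      using assms(10) by (simp add: supersolution_def)
    show ?thesis
    proof (cases "global_slope v z")
      case (real g) then show ?thesis using h by (simp add: a_def)
    next
      case PInf then show ?thesis by simp
    next
      case MInf then show ?thesis using h by simp
    qed
  qed
  have "ereal (a - e) < global_slope v z" 
  proof -
    have "ereal (a - e) < ereal a" using e by simp
    thus ?thesis using Ga by (rule less_le_trans)
  qed
  then obtain t where t: "t \<in> insert 0 ((\<lambda>y. ereal (max 0 (v z - v y) / dist z y)) ` {y. y \<noteq> z})"
    and "ereal (a - e) < t"
    unfolding global_slope_def less_Sup_iff by blast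
  moreover have "a - e > 0" using ab b0 e by linarith
  ultimately obtain y where y: "y \<noteq> z" and yt: "a - e < max 0 (v z - v y) / dist z y"
    by auto
  have dpos: "dist z y > 0" using y by simp
  have "(a - e) * dist z y < max 0 (v z - v y)" using yt dpos by (simp add: field_simps)
  moreover have "(b + e) * dist z y \<le> (a - e) * dist z y"
    using ab dpos by (intro mult_right_mono) auto
  ultimately have vv: "v z - v y > (b + e) * dist z y"
    using b0 e dpos by (smt (verit) mult_pos_pos)
  have "lam * u z + max 0 (u z - u y) / dist z y \<le> l z" using sub_ineq[OF assms(7) y] .
  hence "max 0 (u z - u y) / dist z y \<le> b" by (simp add: b_def)
  hence "max 0 (u z - u y) \<le> b * dist z y" using dpos by (simp add: divide_le_eq)
  hence uu: "u z - u y \<le> b * dist z y" by linarith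
  have "w z - e * dist z y < w y" using z2 y by blast
  thus False using vv uu by (simp add: w_def algebra_simps)
qed

end
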